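(* Let $n\ge 3$ and let $\pi\in S_n$ be a shallow permutation avoiding $132$. If $\pi_j=n$ with $2\le j\le n-1$, then $\pi_n=1$. If $\pi_j=n$ with $2\le j\le n-2$, then $\pi_1=n-1$.
   Context: For $\pi\in S_n$: $D(\pi)=\sum_{i}|\pi_i-i|$, $I(\pi)$ is the number of inversions, $T(\pi)=n-\mathrm{cyc}(\pi)$ with $\mathrm{cyc}$ the number of cycles in the disjoint cycle decomposition; $\pi$ is shallow if $I(\pi)+T(\pi)=D(\pi)$. A permutation avoids a pattern $\sigma$ if it has no subsequence order-isomorphic to $\sigma$. *)

theory Defs
  imports "HOL-Combinatorics.Permutations"
begin

text \<open>A permutation of [n] = {1..n} is a function p :: nat => nat with p permutes {1..n};
  its one-line notation is p 1, ..., p n.\<close>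

definition displacement :: "nat \<Rightarrow> (nat \<Rightarrow> nat) \<Rightarrow> int" where
  "displacement n p = (\<Sum>i\<in>{1..n}. \<bar>int (p i) - int i\<bar>)"

definition inversions :: "nat \<Rightarrow> (nat \<Rightarrow> nat) \<Rightarrow> nat" where
  "inversions n p = card {(i, j). i \<in> {1..n} \<and> j \<in> {1..n} \<and> i < j \<and> p j < p i}"

definition num_cycles :: "nat \<Rightarrow> (nat \<Rightarrow> nat) \<Rightarrow> nat" where
  "num_cycles n p = card ((\<lambda>i. {(p ^^ k) i | k. True}) ` {1..n})"

definition reflection_length :: "nat \<Rightarrow> (nat \<Rightarrow> nat) \<Rightarrow> nat" where
  "reflection_length n p = n - num_cycles n p"

definition shallow :: "nat \<Rightarrow> (nat \<Rightarrow> nat) \<Rightarrow> bool" where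
  "shallow n p \<longleftrightarrow> int (inversions n p) + int (reflection_length n p) = displacement n p"

definition avoids_132 :: "nat \<Rightarrow> (nat \<Rightarrow> nat) \<Rightarrow> bool" where
  "avoids_132 n p \<longleftrightarrow> \<not> (\<exists>i j k. 1 \<le> i \<and> i < j \<and> j < k \<and> k \<le> n \<and> p i < p k \<and> p k < p j)"

end

theory Submission imports Defs "HOL-Combinatorics.Cycles" begin

definition orb :: "(nat \<Rightarrow> nat) \<Rightarrow> nat \<Rightarrow> nat set" where
  "orb p i = {(p ^^ k) i | k. True}"

lemma nc_orb: "num_cycles n p = card (orb p ` {1..n})"
  by (simp add: num_cycles_def orb_def)

lemma orb_self: "x \<in> orb p x"
  unfolding orb_def by (auto intro: exI[of _ 0])

lemma orb_trans: assumes "y \<in> orb p x" shows "orb p y \<subseteq> orb p x"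
proof
  fix z assume "z \<in> orb p y"
  then obtain a where a: "z = (p ^^ a) y" unfolding orb_def by auto
  from assms obtain b where b: "y = (p ^^ b) x" unfolding orb_def by auto
  have "z = (p ^^ (a + b)) x" using a b by (simp add: funpow_add)
  then show "z \<in> orb p x" unfolding orb_def by blast
qed

lemma orb_sym:
  assumes "p permutes {1..n}" and "y \<in> orb p x" shows "x \<in> orb p y"
proof -
  have "permutation p" using assms(1) by (simp add: permutation_permutes) blast
  then obtain N where N: "p ^^ N = id" "N > 0" by (rule permutation_is_nilpotent)
  from assms(2) obtain k where k: "y = (p ^^ k) x" unfolding orb_def by auto
  have "p ^^ (N * k) = id" using N by (metis funpow_mult id_funpow)
  moreover have "N * k = (N * k - k) + k" using N by simp
  ultimately have "x = (p ^^ (N * k - k)) y" using k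
    by (metis comp_apply funpow_add id_apply)
  then show ?thesis unfolding orb_def by blast
qed

lemma orb_eq:
  assumes "p permutes {1..n}" and "y \<in> orb p x" shows "orb p y = orb p x"
  using orb_trans[OF assms(2)] orb_trans[OF orb_sym[OF assms]] by blast

lemma cyc_fix:
  assumes p: "p permutes {1..n}" and n: "n \<ge> 1" and pn: "p n = n"
  shows "num_cycles n p = Suc (num_cycles (n-1) p)"
proof -
  have inj: "inj p" using p permutes_inj by blast
  have o1: "(p ^^ k) n = n" for k by (induct k) (auto simp: pn)
  have on: "orb p n = {n}" unfolding orb_def using o1 by auto
  have o2: "x \<noteq> n \<Longrightarrow> (p ^^ k) x \<noteq> n" for x k
  proof (induct k)
    case (Suc k)
    have "p ((p ^^ k) x) \<noteq> p n" using Suc inj by (metis injD)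
    then show ?case using pn by simp
  qed simp
  have nn: "{n} \<notin> orb p ` {1..n-1}"
  proof
    assume "{n} \<in> orb p ` {1..n-1}"
    then obtain x where x: "x \<in> {1..n-1}" "orb p x = {n}" by auto
    then have "x \<in> {n}" using orb_self by metis
    then show False using x n by auto
  qed
  have "{1..n} = insert n {1..n-1}" using n by auto
  then have "orb p ` {1..n} = insert {n} (orb p ` {1..n-1})" using on by auto
  moreover have "card (insert {n} (orb p ` {1..n-1})) = Suc (card (orb p ` {1..n-1}))"
    using nn by (intro card_insert_disjoint) auto
  ultimately show ?thesis unfolding nc_orb by simp
qed

lemma cyc_step:
  assumes p: "p permutes {1..n}" and j: "j \<in> {1..n}" "j \<noteq> n" and pj: "p j = n"
  shows "num_cycles n p = num_cycles (n-1) (p \<circ> transpose j n)"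
proof -
  define q where "q = p \<circ> transpose j n"
  have inj: "inj p" using p permutes_inj by blast
  have qj: "q j = p n" and qn: "q n = n" and qo: "\<And>i. i \<noteq> j \<Longrightarrow> i \<noteq> n \<Longrightarrow> q i = p i"
    using pj by (auto simp: q_def transpose_def)
  have injq: "inj q" unfolding q_def using inj by (simp add: inj_compose)
  have C: "x \<noteq> n \<Longrightarrow> (q ^^ k) x \<noteq> n" for x k
  proof (induct k)
    case (Suc k)
    have "q ((q ^^ k) x) \<noteq> q n" using Suc injq by (metis injD)
    then show ?case using qn by simp
  qed simp
  have B: "x \<noteq> n \<Longrightarrow> \<exists>k. (p ^^ k) x = (q ^^ k') x" for x k'
  proof (induct k')
    case 0
    then show ?case by (auto intro: exI[of _ 0])
  next
    case (Suc k')
    then obtain k where k: "(p ^^ k) x = (q ^^ k') x" by blast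
    define y where "y = (q ^^ k') x"
    have "y \<noteq> n" using C Suc by (simp add: y_def)
    show ?case
    proof (cases "y = j")
      case True
      then have "(q ^^ Suc k') x = (p ^^ Suc (Suc k)) x"
        using k qj pj by (simp add: y_def)
      then show ?thesis by metis
    next
      case False
      then have "(q ^^ Suc k') x = (p ^^ Suc k) x"
        using k qo \<open>y \<noteq> n\<close> by (simp add: y_def)
      then show ?thesis by metis
    qed
  qed
  have A: "x \<noteq> n \<Longrightarrow> (p ^^ k) x \<noteq> n \<Longrightarrow> \<exists>k'. (q ^^ k') x = (p ^^ k) x" for x k
  proof (induct k rule: less_induct)
    case (less k)
    show ?case
    proof (cases k)
      case 0
      then show ?thesis by (auto intro: exI[of _ 0])
    next
      case (Suc k1)
      define y where "y = (p ^^ k1) x"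
      show ?thesis
      proof (cases "y = n")
        case False
        then obtain k' where k': "(q ^^ k') x = y" using less Suc y_def by auto
        have "y \<noteq> j" using less(3) Suc pj by (auto simp: y_def)
        then have "(q ^^ Suc k') x = (p ^^ k) x" using k' qo False Suc by (simp add: y_def)
        then show ?thesis by metis
      next
        case True
        then obtain k2 where k2: "k1 = Suc k2" using less(2) by (cases k1) (auto simp: y_def)
        have "p ((p ^^ k2) x) = p j" using True pj k2 by (simp add: y_def)
        then have z: "(p ^^ k2) x = j" using inj by (auto dest: injD)
        have "k2 < k" using k2 Suc by simp
        then obtain k' where k': "(q ^^ k') x = j" using less(1)[of k2] less(2) z j by auto
        have "(q ^^ Suc k') x = (p ^^ k) x" using k' qj Suc k2 True by (simp add: y_def)
        then show ?thesis by metis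
      qed
    qed
  qed
  have oq: "x \<noteq> n \<Longrightarrow> orb q x = orb p x - {n}" for x
  proof
    assume x: "x \<noteq> n"
    show "orb q x \<subseteq> orb p x - {n}"
      using B[OF x] C[OF x] unfolding orb_def by (auto, metis)
    show "orb p x - {n} \<subseteq> orb q x"
      using A[OF x] unfolding orb_def by (auto, metis)
  qed
  have "n \<in> orb p j" unfolding orb_def using pj by (auto intro!: exI[of _ 1])
  then have onj: "orb p n = orb p j" using orb_eq[OF p] by blast
  have "{1..n} = insert n {1..n-1}" using j by auto
  then have e1: "orb p ` {1..n} = orb p ` {1..n-1}" using onj j by auto
  have injf: "inj_on (\<lambda>S. S - {n}) (orb p ` {1..n-1})"
  proof (rule inj_onI)
    fix S1 S2 assume S: "S1 \<in> orb p ` {1..n-1}" "S2 \<in> orb p ` {1..n-1}" "S1 - {n} = S2 - {n}"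
    then obtain x1 x2 where x: "x1 \<in> {1..n-1}" "x2 \<in> {1..n-1}" "S1 = orb p x1" "S2 = orb p x2" by auto
    have "x1 \<in> S1 - {n}" using x orb_self by auto
    then have "x1 \<in> orb p x2" using S x by auto
    then show "S1 = S2" using orb_eq[OF p] x by metis
  qed
  have "orb q ` {1..n-1} = (\<lambda>x. orb p x - {n}) ` {1..n-1}"
    by (rule image_cong) (use oq j in auto)
  then have e2: "orb q ` {1..n-1} = (\<lambda>S. S - {n}) ` (orb p ` {1..n-1})"
    by (simp add: image_image)
  show ?thesis unfolding q_def[symmetric] nc_orb e1 e2
    using card_image[OF injf] by simp
qed

lemma perm_range: "p permutes {1..n} \<Longrightarrow> i \<in> {1..n} \<Longrightarrow> 1 \<le> p i \<and> p i \<le> n"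
  using permutes_in_image[of p "{1..n}" i] by auto

lemma perm_eq: "p permutes S \<Longrightarrow> p x = p y \<longleftrightarrow> x = y"
  using permutes_inj[of p S] by (auto dest: injD)

lemma disp_fix:
  assumes n: "n \<ge> 1" and pn: "p n = n"
  shows "displacement n p = displacement (n-1) p"
proof -
  have "{1..n} = insert n {1..n-1}" using n by auto
  moreover have "(\<Sum>i\<in>insert n {1..n-1}. \<bar>int (p i) - int i\<bar>) = \<bar>int (p n) - int n\<bar> + (\<Sum>i\<in>{1..n-1}. \<bar>int (p i) - int i\<bar>)"
    by (rule sum.insert) auto
  ultimately show ?thesis unfolding displacement_def using pn by simp
qed

lemma inv_fix:
  assumes p: "p permutes {1..n}" and n: "n \<ge> 1" and pn: "p n = n"
  shows "inversions n p = inversions (n-1) p"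
proof -
  have "{(i, j). i \<in> {1..n} \<and> j \<in> {1..n} \<and> i < j \<and> p j < p i}
      = {(i, j). i \<in> {1..n-1} \<and> j \<in> {1..n-1} \<and> i < j \<and> p j < p i}"
  proof (intro set_eqI iffI)
    fix x assume "x \<in> {(i, j). i \<in> {1..n} \<and> j \<in> {1..n} \<and> i < j \<and> p j < p i}"
    then obtain i k where x: "x = (i,k)" "i \<in> {1..n}" "k \<in> {1..n}" "i < k" "p k < p i" by auto
    have "k \<noteq> n" using x perm_range[OF p, of i] pn by auto
    then show "x \<in> {(i, j). i \<in> {1..n-1} \<and> j \<in> {1..n-1} \<and> i < j \<and> p j < p i}"
      using x by auto
  qed auto
  then show ?thesis unfolding inversions_def by simp
qed

lemma disp_step:
  assumes p: "p permutes {1..n}" and j: "j \<in> {1..n}" "j \<noteq> n" and pj: "p j = n"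
  shows "displacement n p = displacement (n-1) (p \<circ> transpose j n)
     + (int n - int j) + (int n - int (p n)) - \<bar>int (p n) - int j\<bar>"
proof -
  define q where "q = p \<circ> transpose j n"
  have qj: "q j = p n" and qo: "\<And>i. i \<noteq> j \<Longrightarrow> i \<noteq> n \<Longrightarrow> q i = p i"
    using pj by (auto simp: q_def transpose_def)
  have e: "{1..n} = insert n {1..n-1}" using j by auto
  have jj: "j \<in> {1..n-1}" using j by auto
  have pn: "p n \<le> n" using perm_range[OF p, of n] j by auto
  have s1: "(\<Sum>i\<in>{1..n-1}. \<bar>int (p i) - int i\<bar>) = \<bar>int (p j) - int j\<bar> + (\<Sum>i\<in>{1..n-1}-{j}. \<bar>int (p i) - int i\<bar>)"
    using jj by (simp add: sum.remove)
  have s2: "(\<Sum>i\<in>{1..n-1}. \<bar>int (q i) - int i\<bar>) = \<bar>int (q j) - int j\<bar> + (\<Sum>i\<in>{1..n-1}-{j}. \<bar>int (q i) - int i\<bar>)"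
    using jj by (simp add: sum.remove)
  have s3: "(\<Sum>i\<in>{1..n-1}-{j}. \<bar>int (q i) - int i\<bar>) = (\<Sum>i\<in>{1..n-1}-{j}. \<bar>int (p i) - int i\<bar>)"
    by (rule sum.cong) (auto simp: qo)
  have s0: "(\<Sum>i\<in>insert n {1..n-1}. \<bar>int (p i) - int i\<bar>) = \<bar>int (p n) - int n\<bar> + (\<Sum>i\<in>{1..n-1}. \<bar>int (p i) - int i\<bar>)"
    by (rule sum.insert) auto
  have "\<bar>int (p n) - int n\<bar> = int n - int (p n)" using pn by simp
  moreover have "\<bar>int (p j) - int j\<bar> = int n - int j" using pj j by simp
  ultimately show ?thesis unfolding q_def[symmetric] displacement_def e s0 s1 s2 s3 qj
    by simp
qed

lemma inv_step:
  assumes p: "p permutes {1..n}" and j: "j \<in> {1..n}" "j \<noteq> n" and pj: "p j = n"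
  shows "int (inversions n p) + int (card {i \<in> {1..<j}. p n < p i}) + int (card {k \<in> {j<..<n}. p k < p n})
     \<le> int (inversions (n-1) (p \<circ> transpose j n)) + (int n - int j) + (int n - 1 - int (p n))"
proof -
  define q where "q = p \<circ> transpose j n"
  define m where "m = p n"
  have qj: "q j = m" and qo: "\<And>i. i \<noteq> j \<Longrightarrow> i \<noteq> n \<Longrightarrow> q i = p i"
    using pj by (auto simp: q_def transpose_def m_def)
  have mn: "m < n" using perm_range[OF p, of n] j perm_eq[OF p, of n j] pj by (auto simp: m_def)
  have pr: "\<And>i. i \<in> {1..n} \<Longrightarrow> 1 \<le> p i \<and> p i \<le> n" using perm_range[OF p] by blast
  have pe: "\<And>x y. p x = p y \<longleftrightarrow> x = y" using perm_eq[OF p] by blast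
  define Inv where "Inv = {(i, k). i \<in> {1..n} \<and> k \<in> {1..n} \<and> i < k \<and> p k < p i}"
  define Inv' where "Inv' = {(i, k). i \<in> {1..n-1} \<and> k \<in> {1..n-1} \<and> i < k \<and> q k < q i}"
  define Inv0 where "Inv0 = {(i, k). i \<in> {1..n} \<and> k \<in> {1..n} \<and> i < k \<and> p k < p i \<and> i \<noteq> j \<and> k \<noteq> j \<and> k \<noteq> n}"
  define Z where "Z = {i \<in> {1..n-1}. i \<noteq> j \<and> m < p i}"
  define X1 where "X1 = (\<lambda>k. (j,k)) ` {j<..n}"
  define X2 where "X2 = (\<lambda>i. (i,n)) ` Z"
  define L where "L = {i \<in> {1..<j}. m < p i}"
  define R where "R = {k \<in> {j<..<n}. p k < m}"
  define Y1 where "Y1 = (\<lambda>i. (i,j)) ` L"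
  define Y2 where "Y2 = (\<lambda>k. (j,k)) ` R"
  have fin0: "finite Inv0" unfolding Inv0_def
    by (rule finite_subset[of _ "{1..n} \<times> {1..n}"]) auto
  have sub1: "Inv \<subseteq> Inv0 \<union> X1 \<union> X2"
  proof
    fix x assume "x \<in> Inv"
    then obtain i k where x: "x = (i,k)" "i \<in> {1..n}" "k \<in> {1..n}" "i < k" "p k < p i"
      unfolding Inv_def by auto
    show "x \<in> Inv0 \<union> X1 \<union> X2"
    proof (cases "i = j")
      case True then show ?thesis using x unfolding X1_def by auto
    next
      case False
      have "k \<noteq> j" using x pj pr[of i] by auto
      show ?thesis
      proof (cases "k = n")
        case True
        then have "i \<in> Z" using x False unfolding Z_def m_def by auto
        then show ?thesis using x True unfolding X2_def by auto
      next
        case False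
        then show ?thesis using x \<open>k \<noteq> j\<close> \<open>i \<noteq> j\<close> unfolding Inv0_def by auto
      qed
    qed
  qed
  have c1: "card Inv \<le> card Inv0 + card X1 + card X2"
  proof -
    have "card Inv \<le> card (Inv0 \<union> X1 \<union> X2)"
      using sub1 fin0 by (intro card_mono) (auto simp: X1_def X2_def Z_def)
    also have "\<dots> \<le> card (Inv0 \<union> X1) + card X2" by (rule card_Un_le)
    also have "\<dots> \<le> card Inv0 + card X1 + card X2" using card_Un_le[of Inv0 X1] by simp
    finally show ?thesis .
  qed
  have cX1: "card X1 \<le> n - j" unfolding X1_def using card_image_le[of "{j<..n}" "\<lambda>k. (j,k)"] by simp
  have "card Z \<le> card {m<..<n}"
  proof (rule card_inj_on_le)
    show "inj_on p Z" using pe by (auto intro: inj_onI)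
    show "p ` Z \<subseteq> {m<..<n}"
    proof
      fix y assume "y \<in> p ` Z"
      then obtain i where i: "i \<in> Z" "y = p i" by auto
      have "p i \<noteq> n" using i pj pe unfolding Z_def by auto
      moreover have "p i \<le> n" using i pr[of i] unfolding Z_def by auto
      ultimately show "y \<in> {m<..<n}" using i unfolding Z_def by auto
    qed
  qed simp
  then have cX2: "card X2 \<le> n - 1 - m" unfolding X2_def using card_image_le[of Z "\<lambda>i. (i,n)"] by (simp add: Z_def)
  have sub2: "Inv0 \<union> Y1 \<union> Y2 \<subseteq> Inv'"
  proof -
    have "Inv0 \<subseteq> Inv'"
    proof
      fix x assume "x \<in> Inv0"
      then obtain i k where x: "x = (i,k)" "i \<in> {1..n}" "k \<in> {1..n}" "i < k" "p k < p i" "i \<noteq> j" "k \<noteq> j" "k \<noteq> n"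
        unfolding Inv0_def by auto
      then show "x \<in> Inv'" unfolding Inv'_def using qo[of i] qo[of k] by auto
    qed
    moreover have "Y1 \<subseteq> Inv'"
      unfolding Y1_def L_def Inv'_def using qo qj j by auto
    moreover have "Y2 \<subseteq> Inv'"
      unfolding Y2_def R_def Inv'_def using qo qj j by auto
    ultimately show ?thesis by blast
  qed
  have finI': "finite Inv'" unfolding Inv'_def
    by (rule finite_subset[of _ "{1..n-1} \<times> {1..n-1}"]) auto
  have d1: "Inv0 \<inter> Y1 = {}" unfolding Inv0_def Y1_def by auto
  have d2: "(Inv0 \<union> Y1) \<inter> Y2 = {}" unfolding Inv0_def Y1_def Y2_def L_def by auto
  have cY1: "card Y1 = card L" unfolding Y1_def by (rule card_image) (auto intro: inj_onI)
  have cY2: "card Y2 = card R" unfolding Y2_def by (rule card_image) (auto intro: inj_onI)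
  have "card (Inv0 \<union> Y1 \<union> Y2) = card Inv0 + card L + card R"
    using d1 d2 fin0 cY1 cY2 by (simp add: card_Un_disjoint Y1_def Y2_def L_def R_def)
  then have c2: "card Inv0 + card L + card R \<le> card Inv'"
    using card_mono[OF finI' sub2] by simp
  have "inversions n p = card Inv" "inversions (n-1) q = card Inv'"
    unfolding inversions_def Inv_def Inv'_def by simp_all
  moreover have "card Inv + card L + card R \<le> card Inv' + (n-j) + (n-1-m)"
    using c1 c2 cX1 cX2 by linarith
  moreover have "int (n-j) = int n - int j" "int (n-1-m) = int n - 1 - int m" using mn j by auto
  ultimately show ?thesis
    unfolding q_def[symmetric] m_def[symmetric] L_def[symmetric] R_def[symmetric]
    by (metis (no_types, lifting) of_nat_add of_nat_le_iff)
qed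

lemma ab_bounds:
  assumes p: "p permutes {1..n}" and j: "j \<in> {1..n}" "j \<noteq> n" and pj: "p j = n"
  shows "int j - int (p n) \<le> int (card {i \<in> {1..<j}. p n < p i})"
    and "int (p n) - int j \<le> int (card {k \<in> {j<..<n}. p k < p n})"
proof -
  define m where "m = p n"
  have pr: "\<And>i. i \<in> {1..n} \<Longrightarrow> 1 \<le> p i \<and> p i \<le> n" using perm_range[OF p] by blast
  have pe: "\<And>x y. p x = p y \<longleftrightarrow> x = y" using perm_eq[OF p] by blast
  have neq: "\<And>x. x \<noteq> n \<Longrightarrow> p x \<noteq> m" using pe unfolding m_def by blast
  have mn: "m < n" "1 \<le> m"
  proof -
    have "m \<noteq> n" using neq[of j] j pj by simp
    moreover have "1 \<le> m \<and> m \<le> n" using pr[of n] j unfolding m_def by simp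
    ultimately show "m < n" "1 \<le> m" by simp_all
  qed
  have injp: "inj_on p S" for S using pe by (auto intro: inj_onI)
  define A where "A = {i \<in> {1..<j}. m < p i}"
  define B where "B = {i \<in> {1..<j}. p i < m}"
  have finA: "finite A" "finite B" unfolding A_def B_def by simp_all
  have u1: "{1..<j} \<subseteq> A \<union> B"
  proof
    fix x assume x: "x \<in> {1..<j}"
    then have "p x \<noteq> m" using neq[of x] j by simp
    then show "x \<in> A \<union> B" using x unfolding A_def B_def by (cases "m < p x") auto
  qed
  have "card B \<le> card {1..<m}"
  proof (rule card_inj_on_le[OF injp])
    show "p ` B \<subseteq> {1..<m}"
    proof
      fix y assume "y \<in> p ` B"
      then obtain i where i: "i \<in> B" "y = p i" by blast
      have "i \<in> {1..n}" using i j unfolding B_def by simp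
      then have "1 \<le> p i" using pr by blast
      then show "y \<in> {1..<m}" using i unfolding B_def by simp
    qed
  qed simp
  moreover have "card {1..<j} \<le> card A + card B"
    using card_mono[OF _ u1] card_Un_le[of A B] finA by simp
  ultimately show "int j - int (p n) \<le> int (card {i \<in> {1..<j}. p n < p i})"
    using mn unfolding m_def[symmetric] A_def[symmetric] by simp
  define C where "C = {k \<in> {j<..<n}. p k < m}"
  define D where "D = {k \<in> {j<..<n}. m < p k}"
  have finC: "finite C" "finite D" unfolding C_def D_def by simp_all
  have u2: "{j<..<n} \<subseteq> C \<union> D"
  proof
    fix x assume x: "x \<in> {j<..<n}"
    then have "p x \<noteq> m" using neq[of x] by simp
    then show "x \<in> C \<union> D" using x unfolding C_def D_def by (cases "m < p x") auto
  qed
  have "card D \<le> card {m<..<n}"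
  proof (rule card_inj_on_le[OF injp])
    show "p ` D \<subseteq> {m<..<n}"
    proof
      fix y assume "y \<in> p ` D"
      then obtain k where k: "k \<in> D" "y = p k" by blast
      have kk: "k \<in> {1..n}" "k \<noteq> j" using k j unfolding D_def by auto
      have "p k \<noteq> n" using pe[of k j] pj kk by simp
      moreover have "p k \<le> n" using pr[OF kk(1)] by simp
      ultimately show "y \<in> {m<..<n}" using k unfolding D_def by simp
    qed
  qed simp
  moreover have "card {j<..<n} \<le> card C + card D"
    using card_mono[OF _ u2] card_Un_le[of C D] finC by simp
  ultimately show "int (p n) - int j \<le> int (card {k \<in> {j<..<n}. p k < p n})"
    using mn j unfolding m_def[symmetric] C_def[symmetric] by simp
qed

definition E :: "nat \<Rightarrow> (nat \<Rightarrow> nat) \<Rightarrow> int" where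
  "E n p = displacement n p - int (inversions n p) - int (reflection_length n p)"

lemma nc_le: "num_cycles n p \<le> n"
  unfolding nc_orb using card_image_le[of "{1..n}" "orb p"] by simp

lemma q_perm:
  fixes p :: "nat \<Rightarrow> nat"
  assumes p: "p permutes {1..n}" and j: "j \<in> {1..n}" and pj: "p j = n"
  shows "(p \<circ> transpose j n) permutes {1..n-1}"
proof (rule permutes_superset)
  show "(p \<circ> transpose j n) permutes {1..n}"
  proof -
    have "n \<in> {1..n}" using j by auto
    then show ?thesis by (intro permutes_compose[OF _ p] permutes_swap_id[OF j])
  qed
  show "(p \<circ> transpose j n) x = x" if "x \<in> {1..n} - {1..n-1}" for x
    using that pj by (auto simp: transpose_def)
qed

lemma E_fix:
  assumes p: "p permutes {1..n}" and n: "n \<ge> 1" and pn: "p n = n"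
  shows "E n p = E (n-1) p"
proof -
  have "num_cycles n p = Suc (num_cycles (n-1) p)" by (rule cyc_fix[OF p n pn])
  moreover have "num_cycles (n-1) p \<le> n - 1" by (rule nc_le)
  ultimately have "reflection_length n p = reflection_length (n-1) p"
    unfolding reflection_length_def by simp
  then show ?thesis unfolding E_def using disp_fix[of n p, OF n pn] inv_fix[OF p n pn] by simp
qed

lemma E_step:
  assumes p: "p permutes {1..n}" and j: "j \<in> {1..n}" "j \<noteq> n" and pj: "p j = n"
  shows "E (n-1) (p \<circ> transpose j n)
     + (int (card {i \<in> {1..<j}. p n < p i}) + int (card {k \<in> {j<..<n}. p k < p n}) - \<bar>int (p n) - int j\<bar>)
     \<le> E n p"
proof -
  have c: "num_cycles n p = num_cycles (n-1) (p \<circ> transpose j n)" by (rule cyc_step[OF p j pj])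
  have "num_cycles (n-1) (p \<circ> transpose j n) \<le> n - 1" by (rule nc_le)
  moreover have "n \<ge> 1" using j by auto
  ultimately have "n - num_cycles (n-1) (p \<circ> transpose j n) = (n - 1 - num_cycles (n-1) (p \<circ> transpose j n)) + 1"
    by linarith
  then have "int (reflection_length n p) = int (reflection_length (n-1) (p \<circ> transpose j n)) + 1"
    unfolding reflection_length_def c by simp
  then show ?thesis unfolding E_def using disp_step[OF p j pj] inv_step[OF p j pj] by linarith
qed

lemma DG: "p permutes {1..n} \<Longrightarrow> 0 \<le> E n p"
proof (induct n arbitrary: p)
  case 0
  then show ?case by (simp add: E_def displacement_def inversions_def reflection_length_def)
next
  case (Suc n)
  have p: "p permutes {1..Suc n}" by fact
  obtain j where pj: "p j = Suc n" using permutes_surj[OF p] by (metis surjD)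
  have j: "j \<in> {1..Suc n}" using permutes_in_image[OF p, of j] pj by auto
  show ?case
  proof (cases "j = Suc n")
    case True
    have "p permutes {1..n}"
      by (rule permutes_superset[OF p]) (use True pj le_Suc_eq in auto)
    then show ?thesis using Suc.hyps E_fix[OF p _ ] True pj by fastforce
  next
    case False
    have "(p \<circ> transpose j (Suc n)) permutes {1..n}" using q_perm[OF p j pj] by simp
    then have "0 \<le> E n (p \<circ> transpose j (Suc n))" by (rule Suc.hyps)
    then show ?thesis using E_step[OF p j False pj] ab_bounds[OF p j False pj] by simp
  qed
qed

lemma shallow_E: "shallow n p \<longleftrightarrow> E n p = 0"
  unfolding shallow_def E_def by auto

lemma shallow_step:
  assumes p: "p permutes {1..n}" and j: "j \<in> {1..n}" "j \<noteq> n" and pj: "p j = n"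
    and sh: "shallow n p"
  shows "int (card {i \<in> {1..<j}. p n < p i}) + int (card {k \<in> {j<..<n}. p k < p n}) \<le> \<bar>int (p n) - int j\<bar>"
    and "shallow (n-1) (p \<circ> transpose j n)"
proof -
  have qp: "(p \<circ> transpose j n) permutes {1..n-1}" using q_perm[OF p j(1) pj] .
  have "0 \<le> E (n-1) (p \<circ> transpose j n)" using DG[OF qp] .
  moreover have "0 \<le> int (card {i \<in> {1..<j}. p n < p i}) + int (card {k \<in> {j<..<n}. p k < p n}) - \<bar>int (p n) - int j\<bar>"
    using ab_bounds[OF p j pj] by simp
  moreover note E_step[OF p j pj]
  moreover have "E n p = 0" using sh shallow_E by blast
  ultimately show "int (card {i \<in> {1..<j}. p n < p i}) + int (card {k \<in> {j<..<n}. p k < p n}) \<le> \<bar>int (p n) - int j\<bar>"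
    and "shallow (n-1) (p \<circ> transpose j n)" unfolding shallow_E by linarith+
qed

lemma card_cover: "finite R \<Longrightarrow> {1..<c} \<subseteq> f ` R \<Longrightarrow> c - 1 \<le> card R"
  using card_mono[of "f ` R" "{1..<c}"] card_image_le[of R f] by simp

theorem lemma3p2:
  fixes n j :: nat and p :: "nat \<Rightarrow> nat"
  assumes "n \<ge> 3"
    and "p permutes {1..n}"
    and "shallow n p"
    and "avoids_132 n p"
    and "p j = n"
  shows "(2 \<le> j \<and> j \<le> n - 1 \<longrightarrow> p n = 1) \<and> (2 \<le> j \<and> j \<le> n - 2 \<longrightarrow> p 1 = n - 1)"
proof -
  note n = assms(1) and p = assms(2) and sh = assms(3) and pj = assms(5)
  have av: "\<And>i j k. 1 \<le> i \<Longrightarrow> i < j \<Longrightarrow> j < k \<Longrightarrow> k \<le> n \<Longrightarrow> p i < p k \<Longrightarrow> p k < p j \<Longrightarrow> False"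
    using assms(4) unfolding avoids_132_def by blast
  have pr: "\<And>i. i \<in> {1..n} \<Longrightarrow> 1 \<le> p i \<and> p i \<le> n" using perm_range[OF p] by blast
  have pe: "\<And>x y. p x = p y \<longleftrightarrow> x = y" using perm_eq[OF p] by blast
  have img: "p ` {1..n} = {1..n}" using permutes_image[OF p] .
  have jin: "j \<in> {1..n}" using permutes_in_image[OF p, of j] pj n by auto
  have c1: "p n = 1" if j2: "2 \<le> j" "j \<le> n - 1"
  proof -
    define m where "m = p n"
    have jn: "j \<noteq> n" using j2 n by auto
    have ab: "int (card {i \<in> {1..<j}. m < p i}) + int (card {k \<in> {j<..<n}. p k < m}) \<le> \<bar>int m - int j\<bar>"
      using shallow_step(1)[OF p jin jn pj sh] unfolding m_def .
    have m1: "1 \<le> m" "m < n" using pr[of n] n pe[of n j] pj jn by (auto simp: m_def)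
    have pnj: "p n < p j" using m1 pj by (simp add: m_def)
    have jlt: "j < n" using j2 n by simp
    have "{1..<j} \<subseteq> {i \<in> {1..<j}. m < p i}"
    proof
      fix i assume i: "i \<in> {1..<j}"
      have "p i \<noteq> m" using i pe[of i n] j2 by (auto simp: m_def)
      moreover have "\<not> p i < m" 
      proof
        assume "p i < m"
        then show False using av[of i j n] i jlt pnj by (simp add: m_def)
      qed
      ultimately show "i \<in> {i \<in> {1..<j}. m < p i}" using i by auto
    qed
    then have a: "j - 1 \<le> card {i \<in> {1..<j}. m < p i}"
      using card_mono[of "{i \<in> {1..<j}. m < p i}" "{1..<j}"] by simp
    have "{1..<m} \<subseteq> p ` {k \<in> {j<..<n}. p k < m}"
    proof
      fix v assume v: "v \<in> {1..<m}"
      then have "v \<in> p ` {1..n}" using img m1 by auto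
      then obtain k where k: "k \<in> {1..n}" "p k = v" by auto
      have "k \<noteq> n" using k v by (auto simp: m_def)
      moreover have "k \<noteq> j" using k v m1 pj by auto
      moreover have "\<not> k < j" 
      proof
        assume "k < j"
        then show False using av[of k j n] k v jlt pnj by (simp add: m_def)
      qed
      ultimately show "v \<in> p ` {k \<in> {j<..<n}. p k < m}" using k v by force
    qed
    then have b: "m - 1 \<le> card {k \<in> {j<..<n}. p k < m}" by (intro card_cover) auto
    show ?thesis
    proof (cases "m \<le> j")
      case True
      then show ?thesis using ab a m1 by (simp add: m_def[symmetric])
    next
      case False
      then show ?thesis using ab a b m1 j2 by simp
    qed
  qed
  have c2: "p 1 = n - 1" if j2: "2 \<le> j" "j \<le> n - 2"
  proof -
    have pn: "p n = 1" using c1 j2 by simp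
    have jn: "j \<noteq> n" using j2 n by auto
    define q where "q = p \<circ> transpose j n"
    have qj: "q j = 1" and qn: "q n = n" and qo: "\<And>i. i \<noteq> j \<Longrightarrow> i \<noteq> n \<Longrightarrow> q i = p i"
      using pj pn by (auto simp: q_def transpose_def)
    have qp: "q permutes {1..n-1}" unfolding q_def using q_perm[OF p jin pj] .
    have shq: "shallow (n-1) q" unfolding q_def using shallow_step(2)[OF p jin jn pj sh] .
    have "n - 1 \<in> p ` {1..n}" using img n by auto
    then obtain j' where j': "j' \<in> {1..n}" "p j' = n - 1" by auto
    have j'j: "j' \<noteq> j" using j' pj n by auto
    have j'n: "j' \<noteq> n" using j' pn n by auto
    have j'lt: "j' < j"
    proof (rule ccontr)
      assume "\<not> j' < j"
      then have "j < j'" using j'j by simp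
      have "p 1 \<noteq> n - 1" using pe[of 1 j'] j' \<open>j < j'\<close> j2 by auto
      moreover have "p 1 \<noteq> n" using pe[of 1 j] pj j2 by auto
      moreover have "p 1 \<le> n" using pr[of 1] n by auto
      ultimately have "p 1 < p j'" using j' by simp
      moreover have "p j' < p j" using j' pj n by simp
      moreover have "(1::nat) < j" using j2 by simp
      ultimately show False using av[of 1 j j'] \<open>j < j'\<close> j' by simp
    qed
    have qj': "q j' = n - 1" using qo[OF j'j j'n] j' by simp
    define N where "N = n - 1"
    define m where "m = q N"
    have mp: "m = p (n-1)" using qo[of "n-1"] j2 n by (simp add: m_def N_def)
    have m1: "2 \<le> m" "m \<le> n"
    proof -
      have "1 \<le> p (n-1)" "p (n-1) \<le> n" using pr[of "n-1"] n by auto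
      moreover have "p (n-1) \<noteq> 1" using pe[of "n-1" n] pn n by auto
      ultimately show "2 \<le> m" "m \<le> n" using mp by auto
    qed
    have "n - 1 \<noteq> j" using j2 n by simp
    then have "p (n-1) \<noteq> n" using pe[of "n-1" j] pj by simp
    then have pm: "p (n-1) < p j" using mp m1 pj by simp
    have jlt: "j < n - 1" using j2 n by simp
    have j'in: "j' \<in> {1..N}" "j' \<noteq> N" using j' j'lt j2 by (auto simp: N_def)
    have ab: "int (card {i \<in> {1..<j'}. m < q i}) + int (card {k \<in> {j'<..<N}. q k < m}) \<le> \<bar>int m - int j'\<bar>"
      using shallow_step(1)[OF qp[folded N_def] j'in qj'[folded N_def] shq[folded N_def]]
      unfolding m_def .
    have "{1..<j'} \<subseteq> {i \<in> {1..<j'}. m < q i}"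
    proof
      fix i assume i: "i \<in> {1..<j'}"
      have qi: "q i = p i" using qo[of i] i j'lt j'n j' by auto
      have "p i \<noteq> m" using i pe[of i "n-1"] j'lt j2 mp by auto
      moreover have "\<not> p i < m" 
      proof
        assume "p i < m"
        then show False using av[of i j "n-1"] i j'lt jlt pm mp by simp
      qed
      ultimately show "i \<in> {i \<in> {1..<j'}. m < q i}" using i qi by auto
    qed
    then have a: "j' - 1 \<le> card {i \<in> {1..<j'}. m < q i}"
      using card_mono[of "{i \<in> {1..<j'}. m < q i}" "{1..<j'}"] by simp
    have "{1..<m} \<subseteq> q ` {k \<in> {j'<..<N}. q k < m}"
    proof
      fix v assume v: "v \<in> {1..<m}"
      show "v \<in> q ` {k \<in> {j'<..<N}. q k < m}"
      proof (cases "v = 1")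
        case True
        have "j \<in> {k \<in> {j'<..<N}. q k < m}" using j'lt j2 qj m1 by (auto simp: N_def)
        then show ?thesis using True qj by force
      next
        case False
        have "v \<in> p ` {1..n}" using img m1 v by auto
        then obtain k where k: "k \<in> {1..n}" "p k = v" by auto
        have "k \<noteq> n" using k False pn by auto
        moreover have "k \<noteq> n - 1" using k v mp by auto
        moreover have "k \<noteq> j" using k v m1 pj by auto
        moreover have "\<not> k < j" 
        proof
          assume "k < j"
          then show False using av[of k j "n-1"] k v jlt pm mp by simp
        qed
        ultimately have "k \<in> {j'<..<N}" "q k = v" using k j'lt qo[of k] by (auto simp: N_def)
        then show ?thesis using v by force
      qed
    qed
    then have b: "m - 1 \<le> card {k \<in> {j'<..<N}. q k < m}" by (intro card_cover) auto
    have "j' = 1"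
    proof (cases "m \<le> j'")
      case True
      then show ?thesis using ab a m1 by simp
    next
      case False
      have "int j' - 1 + (int m - 1) \<le> int m - int j'"
        using ab a b m1 j'in False by linarith
      then show ?thesis using j'in by simp
    qed
    then show ?thesis using j' by simp
  qed
  show ?thesis using c1 c2 by blast
qed

end
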